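(* Consider a network of $C$ devices of which a set $\mathcal{K}$ of $K\le C$ devices act as data aggregators, each aggregator $k$ producing a prediction $\Psi_k(X;\theta,\mathcal{G}(t))\in\mathcal{Y}$ (a probability vector over classes) for input $X$. Under the device fault dynamic network $\mathcal{G}_r(t)$ with fault rate $r\in[0,1]$ (each device is present independently with probability $1-r$), the active set $\mathcal{A}$ consists of the aggregators present at the final round, so $\Pr(|\mathcal{A}|=0)=r^K$. Let $h=h_{\mathrm{rand}}$ be the post-processing that outputs the prediction of a uniformly random active aggregator, and outputs the marginal label distribution $p(Y)$ if $\mathcal{A}=\emptyset$. Define the dynamic risk $R_h(\theta;\mathcal{G})=\mathbb{E}_{X,Y,\mathcal{G},h}[\ell(h(\Psi(X;\theta,\mathcal{G})),Y)]$ for a loss $\ell$. Assume that the risk of each aggregator's predictor with faults is at least its risk without faults (i.e., on the fault-free base graph $\mathcal{G}_{\mathrm{base}}$). Then $$R_h(\theta;\mathcal{G}_r(t))\;\ge\;(1-r^K)\,R_h(\theta;\mathcal{G}_{\mathrm{base}})\;+\;r^K\,\mathbb{E}\big[\ell(Y,p(Y))\big],$$ where $\mathbb{E}[\ell(Y,p(Y))]$ is the risk of the random predictor that outputs the marginal label distribution.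
   Context: Data: $(X,Y)\sim p(X,Y)$, features split across devices. The dynamic network $\mathcal{G}(t)=(\mathcal{C}(t),\mathcal{E}(t))$ changes over discrete communication rounds $t$; in the device fault dynamic network with base topology $\mathcal{G}_{\mathrm{base}}=(\mathcal{C}_{\mathrm{base}},\mathcal{E}_{\mathrm{base}})$, each device $c\in\mathcal{C}_{\mathrm{base}}$ is in $\mathcal{C}_r(t)$ with probability $1-r$ and $\mathcal{E}_r(t)$ consists of base edges between present devices. The active set at the final round $T$ is the set of aggregators able to communicate their prediction to the external entity collecting the final output. The risk with $h_{\mathrm{rand}}$ on $\mathcal{G}_{\mathrm{base}}$ equals the average over aggregators of their individual fault-free risks. *)

theory Defs
  imports "HOL-Probability.Probability"
begin

text \<open>A graph is a pair (device set, edge set). A network is a sequence of graphs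
  indexed by the communication round.\<close>
type_synonym 'c graph = "'c set \<times> ('c \<times> 'c) set"
type_synonym 'c network = "nat \<Rightarrow> 'c graph"

definition base_network :: "'c set \<Rightarrow> ('c \<times> 'c) set \<Rightarrow> 'c network" where
  "base_network Cb Eb = (\<lambda>t. (Cb, Eb))"

definition fault_graph :: "'c set \<Rightarrow> ('c \<times> 'c) set \<Rightarrow> (nat \<times> 'c \<Rightarrow> bool) \<Rightarrow> 'c network" where
  "fault_graph Cb Eb \<omega> t =
     (let C = {c \<in> Cb. \<omega> (t, c)} in (C, {(u, v) \<in> Eb. u \<in> C \<and> v \<in> C}))"

definition fault_network :: "'c set \<Rightarrow> ('c \<times> 'c) set \<Rightarrow> nat \<Rightarrow> real \<Rightarrow> 'c network pmf" where
  "fault_network Cb Eb T r =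
     map_pmf (fault_graph Cb Eb) (Pi_pmf ({0..T} \<times> Cb) False (\<lambda>_. bernoulli_pmf (1 - r)))"

definition active_set :: "'c set \<Rightarrow> nat \<Rightarrow> 'c network \<Rightarrow> 'c set" where
  "active_set Ks T G = Ks \<inter> fst (G T)"

text \<open>Random choice made by h_rand: None = no active aggregator (output marginal),
  Some k = uniformly random active aggregator k.\<close>
definition h_rand_choice :: "'c set \<Rightarrow> nat \<Rightarrow> 'c network \<Rightarrow> 'c option pmf" where
  "h_rand_choice Ks T G =
     (if active_set Ks T G = {} then return_pmf None
      else map_pmf Some (pmf_of_set (active_set Ks T G)))"

definition h_output ::
  "'y pmf \<Rightarrow> ('c \<Rightarrow> 'th \<Rightarrow> 'c network \<Rightarrow> 'x \<Rightarrow> 'y pmf) \<Rightarrow> 'th \<Rightarrow> 'c network \<Rightarrow> 'x \<Rightarrow> 'c option \<Rightarrow> 'y pmf" where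
  "h_output pY Psi \<theta> G x ch = (case ch of None \<Rightarrow> pY | Some k \<Rightarrow> Psi k \<theta> G x)"

definition dyn_risk ::
  "('y pmf \<Rightarrow> 'y \<Rightarrow> ennreal) \<Rightarrow> ('x \<times> 'y) measure \<Rightarrow> 'y pmf \<Rightarrow>
   ('c \<Rightarrow> 'th \<Rightarrow> 'c network \<Rightarrow> 'x \<Rightarrow> 'y pmf) \<Rightarrow> 'th \<Rightarrow> 'c set \<Rightarrow> nat \<Rightarrow> 'c network pmf \<Rightarrow> ennreal" where
  "dyn_risk loss D pY Psi \<theta> Ks T N =
     (\<integral>\<^sup>+ G. (\<integral>\<^sup>+ ch. (\<integral>\<^sup>+ z. loss (h_output pY Psi \<theta> G (fst z) ch) (snd z) \<partial>D)
        \<partial>measure_pmf (h_rand_choice Ks T G)) \<partial>measure_pmf N)"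

definition agg_risk ::
  "('y pmf \<Rightarrow> 'y \<Rightarrow> ennreal) \<Rightarrow> ('x \<times> 'y) measure \<Rightarrow>
   ('c \<Rightarrow> 'th \<Rightarrow> 'c network \<Rightarrow> 'x \<Rightarrow> 'y pmf) \<Rightarrow> 'th \<Rightarrow> 'c \<Rightarrow> 'c network \<Rightarrow> ennreal" where
  "agg_risk loss D Psi \<theta> k G = (\<integral>\<^sup>+ z. loss (Psi k \<theta> G (fst z)) (snd z) \<partial>D)"

end

theory Submission
  imports Defs
begin

lemma act_fault:
  assumes "Ks \<subseteq> Cb"
  shows "active_set Ks T (fault_graph Cb Eb \<omega>) = {k\<in>Ks. \<omega> (T,k)}"
  using assms by (auto simp: active_set_def fault_graph_def Let_def)

lemma act_base:
  assumes "Ks \<subseteq> Cb"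
  shows "active_set Ks T (base_network Cb Eb) = Ks"
  using assms by (auto simp: active_set_def base_network_def)

lemma inner:
  assumes "finite Ks"
  shows "(\<integral>\<^sup>+ ch. (\<integral>\<^sup>+ z. loss (h_output pY Psi \<theta> G (fst z) ch) (snd z) \<partial>D)
        \<partial>measure_pmf (h_rand_choice Ks T G)) =
    (if active_set Ks T G = {} then (\<integral>\<^sup>+ z. loss pY (snd z) \<partial>D)
     else (\<Sum>k\<in>active_set Ks T G. agg_risk loss D Psi \<theta> k G) / of_nat (card (active_set Ks T G)))"
proof -
  have fin: "finite (active_set Ks T G)" using assms by (simp add: active_set_def)
  show ?thesis
    using fin by (auto simp: h_rand_choice_def h_output_def agg_risk_def nn_integral_pmf_of_set)
qed

lemma ennreal_nat_inv: "n > 0 \<Longrightarrow> of_nat n * inverse (of_nat n :: ennreal) = 1"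
  using divide_ennreal divide_ennreal_def ennreal_of_nat_eq_real_of_nat by fastforce

lemma sym_int:
  fixes P :: "(nat \<times> 'c \<Rightarrow> bool) pmf"
  assumes "finite Cb" "Ks \<subseteq> Cb" "k \<in> Ks" "k' \<in> Ks"
  and "P = Pi_pmf ({0..T} \<times> Cb) False (\<lambda>_. bernoulli_pmf q)"
  shows "(\<integral>\<^sup>+\<omega>. (if \<omega> (T,k) then inverse (of_nat (card {j\<in>Ks. \<omega> (T,j)})) else 0 :: ennreal) \<partial>P)
       = (\<integral>\<^sup>+\<omega>. (if \<omega> (T,k') then inverse (of_nat (card {j\<in>Ks. \<omega> (T,j)})) else 0 :: ennreal) \<partial>P)"
proof -
  define S where "S = {0..T} \<times> Cb"
  define h where "h = (\<lambda>x. if x = (T,k) then (T,k') else if x = (T,k') then (T,k) else x)"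
  define \<sigma> where "\<sigma> = (\<lambda>x. if x = k then k' else if x = k' then k else x)"
  have hh: "h (h x) = x" for x by (auto simp: h_def)
  have hS: "x \<in> S \<longleftrightarrow> h x \<in> S" for x using assms by (auto simp: h_def S_def)
  have bij: "bij_betw h S S"
    by (rule bij_betwI[where g=h]) (use hS hh in auto)
  have fin: "finite S" using assms by (simp add: S_def)
  have P: "P = map_pmf (\<lambda>g. g \<circ> h) P"
    unfolding assms(5) S_def[symmetric]
    by (rule Pi_pmf_bij_betw[OF fin bij]) (use hS in auto)
  have img: "{j\<in>Ks. \<omega> (h (T,j))} = \<sigma> ` {j\<in>Ks. \<omega> (T,j)}" for \<omega>
    using assms(3,4) by (auto simp: h_def \<sigma>_def image_def split: if_splits)
  have inj: "inj_on \<sigma> A" for A by (rule inj_onI) (auto simp: \<sigma>_def split: if_splits)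
  have card: "card {j\<in>Ks. \<omega> (h (T,j))} = card {j\<in>Ks. \<omega> (T,j)}" for \<omega>
    by (simp add: img card_image[OF inj])
  have "(\<integral>\<^sup>+\<omega>. (if \<omega> (T,k) then inverse (of_nat (card {j\<in>Ks. \<omega> (T,j)})) else 0 :: ennreal) \<partial>P)
     = (\<integral>\<^sup>+\<omega>. (if (\<omega> \<circ> h) (T,k) then inverse (of_nat (card {j\<in>Ks. (\<omega> \<circ> h) (T,j)})) else 0 :: ennreal) \<partial>P)"
    by (subst P) simp
  also have "\<dots> = (\<integral>\<^sup>+\<omega>. (if \<omega> (T,k') then inverse (of_nat (card {j\<in>Ks. \<omega> (T,j)})) else 0 :: ennreal) \<partial>P)"
    unfolding o_def card by (simp add: h_def)
  finally show ?thesis .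
qed

theorem proposition1:
  fixes Cb :: "'c set" and Eb :: "('c \<times> 'c) set" and Ks :: "'c set"
    and T :: nat and r :: real
    and D :: "('x \<times> ('y::finite)) measure" and pY :: "'y pmf"
    and Psi :: "'c \<Rightarrow> 'th \<Rightarrow> 'c network \<Rightarrow> 'x \<Rightarrow> 'y pmf" and \<theta> :: 'th
    and loss :: "'y pmf \<Rightarrow> 'y \<Rightarrow> ennreal"
  assumes "finite Cb" and "Eb \<subseteq> Cb \<times> Cb" and "Ks \<subseteq> Cb"
    and "0 \<le> r" and "r \<le> 1"
    and "prob_space D"
    and "measure_pmf pY = distr D (count_space UNIV) snd"
    and "\<forall>G \<in> set_pmf (fault_network Cb Eb T r). \<forall>k \<in> active_set Ks T G.
           agg_risk loss D Psi \<theta> k G \<ge> agg_risk loss D Psi \<theta> k (base_network Cb Eb)"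
  shows "dyn_risk loss D pY Psi \<theta> Ks T (fault_network Cb Eb T r)
         \<ge> ennreal (1 - r ^ card Ks) * dyn_risk loss D pY Psi \<theta> Ks T (return_pmf (base_network Cb Eb))
           + ennreal (r ^ card Ks) * (\<integral>\<^sup>+ z. loss pY (snd z) \<partial>D)"
proof -
  note fCb = assms(1) and KsCb = assms(3) and r0 = assms(4) and r1 = assms(5)
  have finK: "finite Ks" using fCb KsCb finite_subset by blast
  define S where "S = {0..T} \<times> Cb"
  define P where "P = Pi_pmf S False (\<lambda>_. bernoulli_pmf (1 - r))"
  define act where "act = (\<lambda>\<omega>::nat \<times> 'c \<Rightarrow> bool. {k\<in>Ks. \<omega> (T,k)})"
  define L0 where "L0 = (\<integral>\<^sup>+ z. loss pY (snd z) \<partial>D)"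
  define a where "a = (\<lambda>k. agg_risk loss D Psi \<theta> k (base_network Cb Eb))"
  define K where "K = card Ks"
  define fg where "fg = fault_graph Cb Eb"
  have finS: "finite S" using fCb by (simp add: S_def)
  have actfin: "finite (act \<omega>)" for \<omega> using finK by (simp add: act_def)
  have LHS: "dyn_risk loss D pY Psi \<theta> Ks T (fault_network Cb Eb T r) =
    (\<integral>\<^sup>+\<omega>. (if act \<omega> = {} then L0
       else (\<Sum>k\<in>act \<omega>. agg_risk loss D Psi \<theta> k (fg \<omega>)) / of_nat (card (act \<omega>))) \<partial>P)"
  proof -
    have e: "active_set Ks T (fg \<omega>) = act \<omega>" for \<omega>
      by (simp add: act_fault[OF KsCb] act_def fg_def)
    show ?thesis
      unfolding dyn_risk_def fault_network_def nn_integral_map_pmf inner[OF finK]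
        fg_def[symmetric] e L0_def P_def S_def ..
  qed
  define g where "g = (\<lambda>\<omega>. (if act \<omega> = {} then L0
       else (\<Sum>k\<in>act \<omega>. a k) / of_nat (card (act \<omega>))))"
  have mono: "(\<integral>\<^sup>+\<omega>. g \<omega> \<partial>P) \<le> dyn_risk loss D pY Psi \<theta> Ks T (fault_network Cb Eb T r)"
    unfolding LHS
  proof (rule nn_integral_mono_AE, unfold AE_measure_pmf_iff, intro ballI)
    fix \<omega> assume "\<omega> \<in> set_pmf P"
    then have "fg \<omega> \<in> set_pmf (fault_network Cb Eb T r)"
      by (simp add: fault_network_def P_def S_def fg_def)
    then have "\<forall>k\<in>act \<omega>. a k \<le> agg_risk loss D Psi \<theta> k (fg \<omega>)"
      using assms(8) by (simp add: a_def act_def fg_def act_fault[OF KsCb])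
    then show "g \<omega> \<le> (if act \<omega> = {} then L0
       else (\<Sum>k\<in>act \<omega>. agg_risk loss D Psi \<theta> k (fg \<omega>)) / of_nat (card (act \<omega>)))"
      unfolding g_def divide_ennreal_def
      by (auto intro!: mult_right_mono sum_mono)
  qed
  have B: "dyn_risk loss D pY Psi \<theta> Ks T (return_pmf (base_network Cb Eb)) =
     (if Ks = {} then L0 else (\<Sum>k\<in>Ks. a k) / of_nat K)"
    unfolding dyn_risk_def
    by (simp add: inner[OF finK] act_base[OF KsCb] L0_def a_def K_def)
  show ?thesis
  proof (cases "Ks = {}")
    case True
    then have "g = (\<lambda>_. L0)" by (auto simp: g_def act_def)
    then have "(\<integral>\<^sup>+\<omega>. g \<omega> \<partial>P) = L0"
      by (simp add: measure_pmf.emeasure_space_1)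
    then show ?thesis using mono True B by (simp add: L0_def)
  next
    case False
    define e where "e = (\<lambda>k \<omega>. (if \<omega> (T,k) then inverse (of_nat (card {j\<in>Ks. \<omega> (T,j)})) else 0 :: ennreal))"
    define z where "z = (\<lambda>\<omega>. if act \<omega> = {} then 1 else 0 :: ennreal)"
    define nz where "nz = (\<lambda>\<omega>. if act \<omega> = {} then 0 else 1 :: ennreal)"
    have actI: "act \<omega> = Ks \<inter> {k. \<omega> (T,k)}" for \<omega> by (auto simp: act_def)
    have gdec: "g \<omega> = L0 * z \<omega> + (\<Sum>k\<in>Ks. a k * e k \<omega>)" for \<omega>
    proof (cases "act \<omega> = {}")
      case True
      then have "\<forall>k\<in>Ks. e k \<omega> = 0" by (auto simp: e_def act_def)
      then show ?thesis using True by (simp add: g_def z_def)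
    next
      case False
      have "g \<omega> = (\<Sum>k\<in>act \<omega>. a k * inverse (of_nat (card (act \<omega>))))"
        using False by (simp add: g_def divide_ennreal_def sum_distrib_right)
      also have "\<dots> = (\<Sum>k\<in>Ks. a k * e k \<omega>)"
        unfolding actI sum.inter_restrict[OF finK]
        by (intro sum.cong refl) (auto simp: e_def actI[symmetric] act_def)
      finally show ?thesis using False by (simp add: z_def)
    qed
    have intg: "(\<integral>\<^sup>+\<omega>. g \<omega> \<partial>P) = L0 * (\<integral>\<^sup>+\<omega>. z \<omega> \<partial>P) + (\<Sum>k\<in>Ks. a k * (\<integral>\<^sup>+\<omega>. e k \<omega> \<partial>P))"
      unfolding gdec
      by (simp add: nn_integral_add nn_integral_cmult nn_integral_sum)
    define f where "f = (\<lambda>x b. if x \<in> {T} \<times> Ks \<and> b then 0 else 1 :: ennreal)"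
    have TKS: "{T} \<times> Ks \<subseteq> S" using KsCb by (auto simp: S_def)
    have zprod: "z \<omega> = (\<Prod>x\<in>S. f x (\<omega> x))" for \<omega>
    proof (cases "act \<omega> = {}")
      case True
      then have "\<forall>x\<in>S. f x (\<omega> x) = 1" by (auto simp: f_def act_def)
      then show ?thesis using True by (simp add: z_def prod.neutral)
    next
      case False
      then obtain k where k: "k \<in> Ks" "\<omega> (T,k)" by (auto simp: act_def)
      then have "(T,k) \<in> S" using TKS by auto
      then have "(\<Prod>x\<in>S. f x (\<omega> x)) = 0"
        using k finS by (intro prod_zero) (auto simp: f_def intro!: bexI[of _ "(T,k)"])
      then show ?thesis using False by (simp add: z_def)
    qed
    have zint: "(\<integral>\<^sup>+\<omega>. z \<omega> \<partial>P) = ennreal (r ^ K)"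
    proof -
      have "(\<integral>\<^sup>+\<omega>. z \<omega> \<partial>P) = (\<Prod>x\<in>S. \<integral>\<^sup>+b. f x b \<partial>bernoulli_pmf (1 - r))"
        unfolding zprod P_def by (rule nn_integral_prod_Pi_pmf[OF finS])
      also have "\<dots> = (\<Prod>x\<in>S. if x \<in> {T} \<times> Ks then ennreal r else 1)"
      proof (intro prod.cong refl)
        fix x assume "x \<in> S"
        show "(\<integral>\<^sup>+b. f x b \<partial>bernoulli_pmf (1 - r)) = (if x \<in> {T} \<times> Ks then ennreal r else 1)"
          using r0 r1 by (simp add: f_def ennreal_plus[symmetric] del: ennreal_plus)
      qed
      also have "\<dots> = (\<Prod>x\<in>S \<inter> ({T} \<times> Ks). ennreal r)"
        by (rule prod.inter_restrict[OF finS, symmetric])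
      also have "S \<inter> ({T} \<times> Ks) = {T} \<times> Ks" using TKS by auto
      also have "(\<Prod>x\<in>{T} \<times> Ks. ennreal r) = ennreal (r ^ K)"
        using r0 by (simp add: K_def card_cartesian_product ennreal_power)
      finally show ?thesis .
    qed
    have esum: "(\<Sum>k\<in>Ks. e k \<omega>) = nz \<omega>" for \<omega>
    proof (cases "act \<omega> = {}")
      case True
      then show ?thesis by (auto simp: e_def nz_def act_def intro!: sum.neutral)
    next
      case False
      have "(\<Sum>k\<in>Ks. e k \<omega>) = (\<Sum>k\<in>act \<omega>. inverse (of_nat (card (act \<omega>))))"
        unfolding actI sum.inter_restrict[OF finK]
        by (intro sum.cong refl) (auto simp: e_def actI[symmetric] act_def)
      also have "\<dots> = 1"
        using False actfin[of \<omega>] by (simp add: ennreal_nat_inv card_gt_0_iff)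
      finally show ?thesis using False by (simp add: nz_def)
    qed
    have "(\<integral>\<^sup>+\<omega>. z \<omega> \<partial>P) + (\<integral>\<^sup>+\<omega>. nz \<omega> \<partial>P) = (\<integral>\<^sup>+\<omega>. z \<omega> + nz \<omega> \<partial>P)"
      by (rule nn_integral_add[symmetric]) auto
    also have "\<dots> = (\<integral>\<^sup>+\<omega>. 1 \<partial>P)"
      by (intro nn_integral_cong) (simp add: z_def nz_def)
    also have "\<dots> = 1" by (simp add: measure_pmf.emeasure_space_1)
    also have "1 = ennreal (r ^ K) + ennreal (1 - r ^ K)"
    proof -
      have "r ^ K \<le> 1" using r0 r1 by (simp add: power_le_one)
      then show ?thesis using r0 by (subst ennreal_plus[symmetric]) auto
    qed
    finally have nzint: "(\<integral>\<^sup>+\<omega>. nz \<omega> \<partial>P) = ennreal (1 - r ^ K)"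
      unfolding zint by (simp add: ennreal_add_left_cancel)
    obtain k0 where k0: "k0 \<in> Ks" using False by auto
    define c where "c = (\<integral>\<^sup>+\<omega>. e k0 \<omega> \<partial>P)"
    have ec: "(\<integral>\<^sup>+\<omega>. e k \<omega> \<partial>P) = c" if "k \<in> Ks" for k
      unfolding c_def e_def
      by (rule sym_int[OF fCb KsCb that k0]) (simp add: P_def S_def)
    have Kc: "of_nat K * c = ennreal (1 - r ^ K)"
    proof -
      have "ennreal (1 - r ^ K) = (\<integral>\<^sup>+\<omega>. (\<Sum>k\<in>Ks. e k \<omega>) \<partial>P)"
        unfolding esum nzint ..
      also have "\<dots> = (\<Sum>k\<in>Ks. \<integral>\<^sup>+\<omega>. e k \<omega> \<partial>P)"
        by (simp add: nn_integral_sum)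
      also have "\<dots> = of_nat K * c" by (simp add: ec K_def)
      finally show ?thesis ..
    qed
    have Kpos: "K > 0" using False finK by (simp add: K_def card_gt_0_iff)
    have "(\<integral>\<^sup>+\<omega>. g \<omega> \<partial>P) = L0 * ennreal (r ^ K) + c * (\<Sum>k\<in>Ks. a k)"
      unfolding intg zint by (simp add: ec sum_distrib_left mult.commute)
    also have "c * (\<Sum>k\<in>Ks. a k) = (of_nat K * c) * ((\<Sum>k\<in>Ks. a k) / of_nat K)"
    proof -
      have "(of_nat K * c) * ((\<Sum>k\<in>Ks. a k) / of_nat K) = c * (\<Sum>k\<in>Ks. a k) * (of_nat K * inverse (of_nat K))"
        by (simp add: divide_ennreal_def ac_simps)
      then show ?thesis using ennreal_nat_inv[OF Kpos] by simp
    qed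
    finally have "(\<integral>\<^sup>+\<omega>. g \<omega> \<partial>P) = ennreal (1 - r ^ card Ks) * dyn_risk loss D pY Psi \<theta> Ks T (return_pmf (base_network Cb Eb))
           + ennreal (r ^ card Ks) * (\<integral>\<^sup>+ z. loss pY (snd z) \<partial>D)"
      unfolding Kc B using False by (simp add: K_def L0_def ac_simps)
    then show ?thesis using mono by simp
  qed
qed
end
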